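(* Let $a_1,\dots,a_n\in\mathbb{Z}_{\ge0}$ with $a_1+\cdots+a_n=A$, let $t_1,\dots,t_n\in\mathbb{Z}_{\ge0}$ with $t_1+\cdots+t_n=T$, let $B\in\mathbb{Z}$, and let $p_1,\dots,p_n\in\mathbb{Z}/2$. Then $$\sum_{\substack{f_1+\cdots+f_n=B\\ f_i\equiv p_i \ (\mathrm{mod}\ 2)}}\ \prod_{i=1}^n\binom{2a_i}{f_i}(f_i)_{t_i}=\sum_{\substack{f_1+\cdots+f_n=2A-B+T\\ f_i\equiv p_i+t_i\ (\mathrm{mod}\ 2)}}\ \prod_{i=1}^n\binom{2a_i}{f_i}(f_i)_{t_i},$$ where both sums run over $(f_1,\dots,f_n)\in\mathbb{Z}^n$.
   Context: $\binom{m}{f}$ is the usual binomial coefficient, zero when $f<0$ or $f>m$. $(f)_t:=f(f-1)\cdots(f-t+1)$ is the falling factorial (Pochhammer symbol), with $(f)_0=1$. *)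

theory Defs
  imports Main
begin

definition binomZ :: "int \<Rightarrow> int \<Rightarrow> int" where
  "binomZ m f = (if 0 \<le> f \<and> f \<le> m then int (nat m choose nat f) else 0)"

definition fallfac :: "int \<Rightarrow> nat \<Rightarrow> int" where
  "fallfac f t = (\<Prod>k<t. f - int k)"

text \<open>Tuples with some
  f_i outside [0, 2 a_i] contribute 0 (binomZ vanishes), so we restrict to that box
  to obtain a finite index set.\<close>
definition idx :: "nat \<Rightarrow> (nat \<Rightarrow> nat) \<Rightarrow> int \<Rightarrow> (nat \<Rightarrow> int) \<Rightarrow> (nat \<Rightarrow> int) set" where
  "idx n a S q = {f. (\<forall>i<n. 0 \<le> f i \<and> f i \<le> 2 * int (a i)) \<and> (\<forall>i\<ge>n. f i = 0)
                     \<and> (\<Sum>i<n. f i) = S \<and> (\<forall>i<n. f i mod 2 = q i mod 2)}"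

end

theory Submission
  imports Defs
begin

lemma ff_nat: "fallfac (int f) t = int (fact t * (f choose t))"
proof (induction t)
  case 0
  then show ?case by (simp add: fallfac_def)
next
  case (Suc t)
  have "fallfac (int f) (Suc t) = fallfac (int f) t * (int f - int t)"
    by (simp add: fallfac_def lessThan_Suc mult.commute)
  also have "\<dots> = int (fact t * (f choose t)) * (int f - int t)" using Suc by simp
  also have "\<dots> = int (fact (Suc t) * (f choose Suc t))"
  proof (cases "t \<le> f")
    case True
    have eq: "(f - t) * (f choose t) = Suc t * (f choose Suc t)"
      by (metis binomial_absorption binomial_absorb_comp)
    have "int (fact t * (f choose t)) * (int f - int t) = int (fact t * ((f - t) * (f choose t)))"
      using True by (simp add: of_nat_diff)
    also have "\<dots> = int (fact (Suc t) * (f choose Suc t))"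
      unfolding eq by (simp only: fact_Suc mult_ac of_nat_id)
    finally show ?thesis .
  next
    case False
    then show ?thesis by (simp add: binomial_eq_0)
  qed
  finally show ?case .
qed

lemma g_formula:
  assumes "t \<le> k" "k \<le> m"
  shows "binomZ (int m) (int k) * fallfac (int k) t
       = int (fact t * (m choose t) * ((m - t) choose (k - t)))"
proof -
  have "binomZ (int m) (int k) = int (m choose k)" using assms by (simp add: binomZ_def)
  moreover have "(m choose k) * (k choose t) = (m choose t) * ((m - t) choose (k - t))"
    using choose_mult assms by blast
  ultimately show ?thesis unfolding ff_nat
    by (metis (no_types, lifting) mult.assoc mult.left_commute of_nat_mult)
qed

lemma g_sym:
  assumes "int t \<le> f" "f \<le> int m"
  shows "binomZ (int m) f * fallfac f t
       = binomZ (int m) (int m + int t - f) * fallfac (int m + int t - f) t"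
proof -
  obtain k where k: "f = int k" using assms by (metis nonneg_int_cases of_nat_0_le_iff order_trans)
  have tk: "t \<le> k" "k \<le> m" using assms k by auto
  have e: "int m + int t - f = int (m + t - k)" using tk k by simp
  have tk2: "t \<le> m + t - k" "m + t - k \<le> m" using tk by auto
  have L: "binomZ (int m) f * fallfac f t = int (fact t * (m choose t) * ((m - t) choose (k - t)))"
    unfolding k by (rule g_formula[OF tk])
  have R: "binomZ (int m) (int m + int t - f) * fallfac (int m + int t - f) t
      = int (fact t * (m choose t) * ((m - t) choose (m + t - k - t)))"
    unfolding e by (rule g_formula[OF tk2])
  have "(m - t) choose (k - t) = (m - t) choose ((m - t) - (k - t))"
    using tk by (intro binomial_symmetric) simp
  moreover have "(m - t) - (k - t) = m + t - k - t" using tk by simp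
  ultimately show ?thesis unfolding L R by simp
qed

lemma g_zero:
  assumes "\<not> (int t \<le> f \<and> f \<le> int m)"
  shows "binomZ (int m) f * fallfac f t = 0"
proof (cases "0 \<le> f \<and> f \<le> int m")
  case False
  then show ?thesis by (auto simp: binomZ_def)
next
  case True
  then have "f < int t" using assms by auto
  then have "nat f < t" "f - int (nat f) = 0" using True by auto
  then have "fallfac f t = 0" unfolding fallfac_def
    by (metis finite_lessThan lessThan_iff prod_zero_iff)
  then show ?thesis by simp
qed

theorem lemmaA1:
  fixes n :: nat and a t :: "nat \<Rightarrow> nat" and A T :: nat and B :: int and p :: "nat \<Rightarrow> int"
  assumes "(\<Sum>i<n. a i) = A"
    and "(\<Sum>i<n. t i) = T"
  shows "(\<Sum>f\<in>idx n a B p. \<Prod>i<n. binomZ (2 * int (a i)) (f i) * fallfac (f i) (t i))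
       = (\<Sum>f\<in>idx n a (2 * int A - B + int T) (\<lambda>i. p i + int (t i)).
            \<Prod>i<n. binomZ (2 * int (a i)) (f i) * fallfac (f i) (t i))"
proof -
  define h where "h f = (\<Prod>i<n. binomZ (2 * int (a i)) (f i) * fallfac (f i) (t i))" for f
  define R where "R S q = idx n a S q \<inter> {f. \<forall>i<n. int (t i) \<le> f i}" for S q
  have fin: "finite (idx n a S q)" for S q
  proof (rule finite_subset)
    show "idx n a S q \<subseteq> {f. \<forall>x. (x \<in> {..<n} \<longrightarrow> f x \<in> {0..2 * int A}) \<and> (x \<notin> {..<n} \<longrightarrow> f x = 0)}"
    proof (intro subsetI CollectI allI conjI impI)
      fix f x assume f: "f \<in> idx n a S q"
      { assume x: "x \<in> {..<n}"
        have "a x \<le> A" using assms(1) x by (metis finite_lessThan member_le_sum zero_le)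
        then show "f x \<in> {0..2 * int A}" using f x unfolding idx_def by auto }
      { assume "x \<notin> {..<n}" then show "f x = 0" using f unfolding idx_def by auto }
    qed
    show "finite {f. \<forall>x. (x \<in> {..<n} \<longrightarrow> f x \<in> {0..2 * int A}) \<and> (x \<notin> {..<n} \<longrightarrow> f x = (0::int))}"
      by (rule finite_set_of_finite_funs) auto
  qed
  have red: "sum h (idx n a S q) = sum h (R S q)" for S q
  proof (rule sum.mono_neutral_right[OF fin])
    show "R S q \<subseteq> idx n a S q" unfolding R_def by auto
    show "\<forall>f\<in>idx n a S q - R S q. h f = 0"
    proof
      fix f assume "f \<in> idx n a S q - R S q"
      then obtain i where i: "i < n" "f i < int (t i)" unfolding R_def by auto
      have "binomZ (int (2 * a i)) (f i) * fallfac (f i) (t i) = 0"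
        by (rule g_zero) (use i in auto)
      then show "h f = 0" unfolding h_def using i
        by (metis (no_types, lifting) finite_lessThan lessThan_iff of_nat_mult of_nat_numeral prod_zero_iff)
    qed
  qed
  define \<phi> where "\<phi> f = (\<lambda>i. if i < n then 2 * int (a i) + int (t i) - f i else 0)" for f :: "nat \<Rightarrow> int"
  have sumA: "(\<Sum>i<n. int (a i)) = int A" using assms(1) by (metis of_nat_sum)
  have sumT: "(\<Sum>i<n. int (t i)) = int T" using assms(2) by (metis of_nat_sum)
  have sphi: "(\<Sum>i<n. \<phi> f i) = 2 * int A + int T - (\<Sum>i<n. f i)" for f
  proof -
    have "(\<Sum>i<n. \<phi> f i) = (\<Sum>i<n. 2 * int (a i) + int (t i) - f i)"
      unfolding \<phi>_def by simp
    also have "\<dots> = 2 * (\<Sum>i<n. int (a i)) + (\<Sum>i<n. int (t i)) - (\<Sum>i<n. f i)"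
      by (simp add: sum_subtractf sum.distrib sum_distrib_left)
    finally show ?thesis using sumA sumT by simp
  qed
  have mapR: "\<phi> f \<in> R S' q'" if f: "f \<in> R S q" and S': "S' = 2 * int A + int T - S"
    and par: "\<And>i. i < n \<Longrightarrow> (2 * int (a i) + int (t i) - f i) mod 2 = q' i mod 2" for f S q S' q'
  proof -
    have "\<forall>i<n. 0 \<le> f i \<and> f i \<le> 2 * int (a i)" "(\<Sum>i<n. f i) = S" "\<forall>i<n. int (t i) \<le> f i"
      using f unfolding R_def idx_def by auto
    then show ?thesis unfolding R_def idx_def using par sphi[of f] S'
      by (auto simp: \<phi>_def)
  qed
  have invol: "\<phi> (\<phi> f) = f" if "f \<in> R S q" for f S q
    using that unfolding R_def idx_def \<phi>_def by (auto simp: fun_eq_iff)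
  have hphi: "h (\<phi> f) = h f" if "f \<in> R S q" for f S q
    unfolding h_def
  proof (rule prod.cong[OF refl])
    fix i assume i: "i \<in> {..<n}"
    have b: "int (t i) \<le> f i" "f i \<le> int (2 * a i)" using that i unfolding R_def idx_def by auto
    show "binomZ (2 * int (a i)) (\<phi> f i) * fallfac (\<phi> f i) (t i) =
          binomZ (2 * int (a i)) (f i) * fallfac (f i) (t i)"
      using g_sym[OF b] i by (simp add: \<phi>_def)
  qed
  let ?S2 = "2 * int A - B + int T" and ?q2 = "\<lambda>i. p i + int (t i)"
  have "sum h (R B p) = sum h (R ?S2 ?q2)"
  proof (rule sum.reindex_bij_witness[where i = \<phi> and j = \<phi>])
    fix f assume f: "f \<in> R B p"
    show "\<phi> (\<phi> f) = f" using invol[OF f] .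
    show "h (\<phi> f) = h f" using hphi[OF f] .
    show "\<phi> f \<in> R ?S2 ?q2"
    proof (rule mapR[OF f])
      fix i assume "i < n"
      then have "f i mod 2 = p i mod 2" using f unfolding R_def idx_def by auto
      then show "(2 * int (a i) + int (t i) - f i) mod 2 = (p i + int (t i)) mod 2"
        by presburger
    qed simp
  next
    fix f assume f: "f \<in> R ?S2 ?q2"
    show "\<phi> (\<phi> f) = f" using invol[OF f] .
    show "\<phi> f \<in> R B p"
    proof (rule mapR[OF f])
      fix i assume "i < n"
      then have "f i mod 2 = (p i + int (t i)) mod 2" using f unfolding R_def idx_def by auto
      then show "(2 * int (a i) + int (t i) - f i) mod 2 = p i mod 2"
        by presburger
    qed simp
  qed
  then show ?thesis using red unfolding h_def by metis
qed

end
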